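(* Let $M$ be a closed manifold immersed in $(V,\omega)=(\mathbb{R}^{2d},\sum_i dx_i\wedge dy_i)$ satisfying condition (LL): for every $P\in V$ there exists a point $x\in M$ with $T_xM\not\subset (x-P)^\omega$. Let $L_1,L_2\subset V$ be affine Lagrangian subspaces in general position, and let $n\ge 2$. Then there exist at least two distinct non-degenerate $n$-link outer symplectic billiard trajectories connecting $L_1$ and $L_2$.
   Context: Points of $M$ are identified with their images in $V$ and $T_xM\subset V$ denotes the tangent space at $x$. For a vector $u\in V$, $u^\omega=\{\xi\in V:\omega(\xi,u)=0\}$ is the symplectic complement of $\mathbb{R}u$. For a point $Q$ of $M$, $T_Q^\omega M=\{\xi\in V:\omega(\xi,\zeta)=0\ \forall \zeta\in T_QM\}$. Two points $z,z'\in V$ are in outer symplectic billiard correspondence with respect to $M$ if $Q=\tfrac12(z+z')$ is a point of $M$ and $z'-z\in T^\omega_QM$. Two affine Lagrangian subspaces are in general position if they contain no parallel lines (their direction subspaces intersect only in $0$). An $n$-link outer symplectic billiard trajectory connecting $L_1$ and $L_2$ is a tuple $(z_1,\dots,z_{n+1})$ of points of $V$ with $z_1\in L_1$, $z_{n+1}\in L_2$, and $z_i,z_{i+1}$ in outer symplectic billiard correspondence for each $i=1,\dots,n$. It is degenerate if $z_{i-1}=z_{i+1}$ for some $i\in\{2,\dots,n\}$, and non-degenerate otherwise. *)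

theory Defs
  imports "HOL-Analysis.Analysis"
begin

fun Ck :: "nat \<Rightarrow> 'a::euclidean_space set \<Rightarrow> ('a \<Rightarrow> 'b::real_normed_vector) \<Rightarrow> bool" where
  "Ck 0 U g = continuous_on U g"
| "Ck (Suc k) U g = (g differentiable_on U \<and> continuous_on U g \<and>
      (\<forall>v. Ck k U (\<lambda>x. frechet_derivative g (at x) v)))"

definition smooth_on :: "'a::euclidean_space set \<Rightarrow> ('a \<Rightarrow> 'b::real_normed_vector) \<Rightarrow> bool" where
  "smooth_on U g \<longleftrightarrow> (\<forall>k. Ck k U g)"

definition local_param :: "'a::euclidean_space set \<Rightarrow> ('k::euclidean_space \<Rightarrow> 'a) \<Rightarrow> 'k set \<Rightarrow> bool" where
  "local_param S \<phi> W \<longleftrightarrow> open W \<and> smooth_on W \<phi> \<and>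
     (\<exists>U. open U \<and> \<phi> ` W = S \<inter> U \<and> inj_on \<phi> W \<and> continuous_on (S \<inter> U) (inv_into W \<phi>)) \<and>
     (\<forall>w\<in>W. inj (frechet_derivative \<phi> (at w)))"

definition closed_manifold :: "'k::euclidean_space itself \<Rightarrow> 'a::euclidean_space set \<Rightarrow> bool" where
  "closed_manifold (TYPE('k)) S \<longleftrightarrow> compact S \<and>
     (\<forall>p\<in>S. \<exists>(\<phi>::'k \<Rightarrow> 'a) W. local_param S \<phi> W \<and> p \<in> \<phi> ` W)"

definition immersion :: "'k::euclidean_space itself \<Rightarrow> 'a::euclidean_space set \<Rightarrow> ('a \<Rightarrow> 'v::euclidean_space) \<Rightarrow> bool" where
  "immersion (TYPE('k)) S f \<longleftrightarrow>
     (\<forall>(\<phi>::'k \<Rightarrow> 'a) W. local_param S \<phi> W \<longrightarrow>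
        smooth_on W (f \<circ> \<phi>) \<and> (\<forall>w\<in>W. inj (frechet_derivative (f \<circ> \<phi>) (at w))))"

definition tangent_space :: "'k::euclidean_space itself \<Rightarrow> 'a::euclidean_space set \<Rightarrow> ('a \<Rightarrow> 'v::euclidean_space) \<Rightarrow> 'a \<Rightarrow> 'v set" where
  "tangent_space (TYPE('k)) S f p =
     {v. \<exists>(\<phi>::'k \<Rightarrow> 'a) W w. local_param S \<phi> W \<and> w \<in> W \<and> \<phi> w = p \<and>
          v \<in> range (frechet_derivative (f \<circ> \<phi>) (at w))}"

type_synonym 'd sympl = "(real^'d) \<times> (real^'d)"

definition omega :: "'d::finite sympl \<Rightarrow> 'd sympl \<Rightarrow> real" where
  "omega u v = fst u \<bullet> snd v - snd u \<bullet> fst v"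

definition symp_compl :: "'d::finite sympl \<Rightarrow> 'd sympl set" where
  "symp_compl u = {\<xi>. omega \<xi> u = 0}"

definition symp_orth :: "'d::finite sympl set \<Rightarrow> 'd sympl set" where
  "symp_orth T = {\<xi>. \<forall>\<zeta>\<in>T. omega \<xi> \<zeta> = 0}"

definition affine_lagrangian :: "'d::finite sympl set \<Rightarrow> bool" where
  "affine_lagrangian L \<longleftrightarrow> (\<exists>a W. subspace W \<and> dim W = CARD('d) \<and>
      (\<forall>u\<in>W. \<forall>v\<in>W. omega u v = 0) \<and> L = (\<lambda>w. a + w) ` W)"

definition direction :: "'d::finite sympl set \<Rightarrow> 'd sympl set" where
  "direction L = {x - y | x y. x \<in> L \<and> y \<in> L}"

definition general_position :: "'d::finite sympl set \<Rightarrow> 'd sympl set \<Rightarrow> bool" where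
  "general_position L1 L2 \<longleftrightarrow> direction L1 \<inter> direction L2 = {0}"

definition cond_LL :: "'k::euclidean_space itself \<Rightarrow> 'a::euclidean_space set \<Rightarrow> ('a \<Rightarrow> 'd::finite sympl) \<Rightarrow> bool" where
  "cond_LL K S f \<longleftrightarrow> (\<forall>P. \<exists>x\<in>S. \<not> (tangent_space K S f x \<subseteq> symp_compl (f x - P)))"

definition osb_corr :: "'k::euclidean_space itself \<Rightarrow> 'a::euclidean_space set \<Rightarrow> ('a \<Rightarrow> 'd::finite sympl) \<Rightarrow> 'd sympl \<Rightarrow> 'd sympl \<Rightarrow> bool" where
  "osb_corr K S f z z' \<longleftrightarrow> (\<exists>Q\<in>S. f Q = (1/2) *\<^sub>R (z + z') \<and> z' - z \<in> symp_orth (tangent_space K S f Q))"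

text \<open>An n-link trajectory (z_1,...,z_{n+1}) is the list zs with zs!(i-1) = z_i.\<close>
definition osb_trajectory :: "'k::euclidean_space itself \<Rightarrow> 'a::euclidean_space set \<Rightarrow> ('a \<Rightarrow> 'd::finite sympl) \<Rightarrow> nat \<Rightarrow> 'd sympl set \<Rightarrow> 'd sympl set \<Rightarrow> 'd sympl list \<Rightarrow> bool" where
  "osb_trajectory K S f n L1 L2 zs \<longleftrightarrow> length zs = n + 1 \<and> zs ! 0 \<in> L1 \<and> zs ! n \<in> L2 \<and>
     (\<forall>i<n. osb_corr K S f (zs ! i) (zs ! (i + 1)))"

definition non_degenerate :: "nat \<Rightarrow> 'd::finite sympl list \<Rightarrow> bool" where
  "non_degenerate n zs \<longleftrightarrow> (\<forall>i. 1 \<le> i \<and> i + 1 \<le> n \<longrightarrow> zs ! (i - 1) \<noteq> zs ! (i + 1))"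

end

theory Submission
  imports Defs
begin

lemma omega_add_left[simp]: "omega (a + b) c = omega a c + omega b c"
  by (simp add: omega_def inner_add_left inner_add_right)
lemma omega_add_right[simp]: "omega c (a + b) = omega c a + omega c b"
  by (simp add: omega_def inner_add_left inner_add_right)
lemma omega_diff_left[simp]: "omega (a - b) c = omega a c - omega b c"
  by (simp add: omega_def inner_diff_left inner_diff_right)
lemma omega_diff_right[simp]: "omega c (a - b) = omega c a - omega c b"
  by (simp add: omega_def inner_diff_left inner_diff_right)
lemma omega_minus_left[simp]: "omega (- a) c = - omega a c"
  by (simp add: omega_def)
lemma omega_minus_right[simp]: "omega c (- a) = - omega c a"
  by (simp add: omega_def)
lemma omega_scaleR_left[simp]: "omega (r *\<^sub>R a) c = r * omega a c"
  by (simp add: omega_def algebra_simps)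
lemma omega_scaleR_right[simp]: "omega c (r *\<^sub>R a) = r * omega c a"
  by (simp add: omega_def algebra_simps)
lemma omega_zero_left[simp]: "omega 0 c = 0" by (simp add: omega_def)
lemma omega_zero_right[simp]: "omega c 0 = 0" by (simp add: omega_def)
lemma omega_self[simp]: "omega a a = 0" by (simp add: omega_def inner_commute)
lemma omega_antisym: "omega a b = - omega b a" by (simp add: omega_def inner_commute)
lemma omega_sum_right: "omega c (sum g A) = (\<Sum>i\<in>A. omega c (g i))"
  by (induction A rule: infinite_finite_induct) auto

lemma bounded_bilinear_omega: "bounded_bilinear omega"
proof
  fix a a' b b' :: "'a::finite sympl" and r :: real
  show "omega (a + a') b = omega a b + omega a' b" by simp
  show "omega a (b + b') = omega a b + omega a b'" by simp
  show "omega (r *\<^sub>R a) b = r *\<^sub>R omega a b" by simp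
  show "omega a (r *\<^sub>R b) = r *\<^sub>R omega a b" by simp
next
  show "\<exists>K. \<forall>a b. norm (omega (a::'a sympl) b) \<le> norm a * norm b * K"
  proof (intro exI allI)
    fix a b :: "'a sympl"
    have "\<bar>fst a \<bullet> snd b\<bar> \<le> norm (fst a) * norm (snd b)" by (rule Cauchy_Schwarz_ineq2)
    also have "\<dots> \<le> norm a * norm b" by (intro mult_mono norm_ge_zero; metis norm_fst_le norm_snd_le prod.collapse)
    finally have 1: "\<bar>fst a \<bullet> snd b\<bar> \<le> norm a * norm b" .
    have "\<bar>snd a \<bullet> fst b\<bar> \<le> norm (snd a) * norm (fst b)" by (rule Cauchy_Schwarz_ineq2)
    also have "\<dots> \<le> norm a * norm b" by (intro mult_mono norm_ge_zero; metis norm_fst_le norm_snd_le prod.collapse)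
    finally have 2: "\<bar>snd a \<bullet> fst b\<bar> \<le> norm a * norm b" .
    show "norm (omega a b) \<le> norm a * norm b * 2"
      using 1 2 by (simp add: omega_def)
  qed
qed



lemma continuous_on_omega[continuous_intros]:
  "continuous_on A g1 \<Longrightarrow> continuous_on A g2 \<Longrightarrow> continuous_on A (\<lambda>x. omega (g1 x) (g2 x))"
  unfolding omega_def by (intro continuous_intros)

lemma lagr_data:
  assumes "affine_lagrangian (L :: 'd::finite sympl set)"
  obtains a E where "subspace E" "dim E = CARD('d)" "\<forall>u\<in>E. \<forall>v\<in>E. omega u v = 0"
    "L = (\<lambda>w. a + w) ` E" "direction L = E"
proof -
  obtain a E where E: "subspace E" "dim E = CARD('d)" "\<forall>u\<in>E. \<forall>v\<in>E. omega u v = 0"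
    "L = (\<lambda>w. a + w) ` E" using assms unfolding affine_lagrangian_def by blast
  have "direction L = E"
  proof
    show "direction L \<subseteq> E"
    proof
      fix x assume "x \<in> direction L"
      then obtain y z where yz: "x = y - z" "y \<in> L" "z \<in> L" unfolding direction_def by blast
      then obtain e1 e2 where "y = a + e1" "z = a + e2" "e1 \<in> E" "e2 \<in> E" using E(4) by blast
      then have "x = e1 - e2" "e1 \<in> E" "e2 \<in> E" using yz by auto
      then show "x \<in> E" using E(1) by (simp add: subspace_diff)
    qed
    show "E \<subseteq> direction L"
    proof
      fix x assume "x \<in> E"
      have "0 \<in> E" by (rule subspace_0[OF E(1)])
      then have "a + 0 \<in> L" using E(4) by blast
      moreover have "a + x \<in> L" using E(4) \<open>x \<in> E\<close> by blast
      ultimately have "x = (a + x) - (a + 0)" "a + x \<in> L" "a + 0 \<in> L" by auto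
      then show "x \<in> direction L" unfolding direction_def by blast
    qed
  qed
  with E that show ?thesis by blast
qed

lemma complement_proj:
  fixes E1 E2 :: "'d::finite sympl set"
  assumes "subspace E1" "subspace E2" "dim E1 = CARD('d)" "dim E2 = CARD('d)" "E1 \<inter> E2 = {0}"
  obtains pr1 where "linear pr1" "\<And>x. pr1 x \<in> E1" "\<And>x. x - pr1 x \<in> E2"
proof -
  let ?ST = "{x + y |x y. x \<in> E1 \<and> y \<in> E2}"
  have "dim ?ST + dim (E1 \<inter> E2) = dim E1 + dim E2"
    using assms by (intro dim_sums_Int)
  moreover have "DIM('d sympl) = CARD('d) + CARD('d)" by simp
  ultimately have "dim ?ST = DIM('d sympl)" using assms by simp
  then have sp: "span ?ST = UNIV" using dim_eq_full[of ?ST] by blast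
  have ss: "subspace ?ST" using assms by (intro subspace_sums)
  have "?ST = span ?ST" by (rule span_eq_iff[THEN iffD2, OF ss, symmetric])
  also have "\<dots> = UNIV" by (rule sp)
  finally have ST: "?ST = UNIV" .
  have ex: "\<exists>e. e \<in> E1 \<and> x - e \<in> E2" for x
  proof -
    have "x \<in> ?ST" using ST by (rule equalityD2[THEN subsetD]) simp
    then obtain y z where "x = y + z" "y \<in> E1" "z \<in> E2" by blast
    then show ?thesis by (intro exI[of _ y]) auto
  qed
  have uniq: "e = e'" if "e \<in> E1" "x - e \<in> E2" "e' \<in> E1" "x - e' \<in> E2" for x e e'
  proof -
    have "e - e' \<in> E1" using that assms(1) by (simp add: subspace_diff)
    moreover have "(x - e') - (x - e) \<in> E2" by (rule subspace_diff[OF assms(2) that(4) that(2)])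
    then have "e - e' \<in> E2" by simp
    ultimately have "e - e' \<in> E1 \<inter> E2" by blast
    then have "e - e' = 0" using assms(5) by blast
    then show ?thesis by simp
  qed
  define pr1 where "pr1 x = (SOME e. e \<in> E1 \<and> x - e \<in> E2)" for x
  have P: "pr1 x \<in> E1 \<and> x - pr1 x \<in> E2" for x
    unfolding pr1_def using someI_ex[OF ex] by blast
  have "linear pr1"
  proof (rule linearI)
    fix x y
    have "pr1 x + pr1 y \<in> E1" using P assms(1) by (simp add: subspace_add)
    moreover have "(x + y) - (pr1 x + pr1 y) = (x - pr1 x) + (y - pr1 y)" by simp
    then have "(x + y) - (pr1 x + pr1 y) \<in> E2" using P assms(2) by (metis subspace_add)
    ultimately show "pr1 (x + y) = pr1 x + pr1 y" using P uniq by blast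
  next
    fix c :: real and x
    have "c *\<^sub>R pr1 x \<in> E1" using P assms(1) by (simp add: subspace_scale)
    moreover have "c *\<^sub>R x - c *\<^sub>R pr1 x = c *\<^sub>R (x - pr1 x)" by (simp add: algebra_simps)
    then have "c *\<^sub>R x - c *\<^sub>R pr1 x \<in> E2" using P assms(2) by (metis subspace_scale)
    ultimately show "pr1 (c *\<^sub>R x) = c *\<^sub>R pr1 x" using P uniq by blast
  qed
  with P that show ?thesis by blast
qed

primrec zz :: "(nat \<Rightarrow> 'd::finite sympl) \<Rightarrow> 'd sympl \<Rightarrow> nat \<Rightarrow> 'd sympl" where
  "zz p u 0 = u"
| "zz p u (Suc i) = 2 *\<^sub>R p i - zz p u i"

lemma zz_shift: "zz p (u + v) i = zz p u i + ((-1)^i) *\<^sub>R v"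
  by (induction i) (auto simp: algebra_simps)

lemma zz_cong: "(\<And>j. j < i \<Longrightarrow> p j = q j) \<Longrightarrow> zz p u i = zz q u i"
  by (induction i) auto

lemma zz_upd_gen:
  assumes q1: "\<And>j. j \<noteq> k \<Longrightarrow> q j = p j" and q2: "q k = p k + h"
  shows "zz q u i = zz p u i + (if k < i then (2 * (-1)^(i - Suc k)) *\<^sub>R h else 0)"
proof (induction i)
  case 0 then show ?case by simp
next
  case (Suc i)
  show ?case
  proof (cases "k < i")
    case True
    define c :: real where "c = 2 * (-1)^(i - Suc k)"
    have "Suc i - Suc k = Suc (i - Suc k)" using True by simp
    then have e: "2 * (-1::real)^(Suc i - Suc k) = - c" unfolding c_def by simp
    have IH': "zz q u i = zz p u i + c *\<^sub>R h"
      using Suc.IH unfolding c_def if_P[OF True] .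
    have pi: "q i = p i" using True q1 by simp
    have L: "zz q u (Suc i) = 2 *\<^sub>R p i - (zz p u i + c *\<^sub>R h)"
      by (simp only: zz.simps(2) IH' pi)
    have "2 *\<^sub>R p i - (zz p u i + c *\<^sub>R h) = (2 *\<^sub>R p i - zz p u i) + (- c) *\<^sub>R h"
      by (simp add: algebra_simps)
    then show ?thesis unfolding L e if_P[OF True] using True by simp
  next
    case False
    have IH: "zz q u i = zz p u i" using Suc.IH unfolding if_not_P[OF False] add_0_right .
    show ?thesis
    proof (cases "i = k")
      case True
      have "2 *\<^sub>R (p k + h) - zz p u k = (2 *\<^sub>R p k - zz p u k) + 2 *\<^sub>R h"
        by (simp add: algebra_simps)
      then show ?thesis using IH True q2 by simp
    next
      case False2: False
      then show ?thesis using IH False q1 by simp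
    qed
  qed
qed

lemma zz_upd: "zz (p(k := p k + h)) u i = zz p u i + (if k < i then (2 * (-1)^(i - Suc k)) *\<^sub>R h else 0)"
  by (rule zz_upd_gen) auto

lemma alt_aux:
  fixes S u z a :: "'a::real_vector"
  shows "2 *\<^sub>R S = u - c *\<^sub>R z \<Longrightarrow> 2 *\<^sub>R (S + c *\<^sub>R a) = u - (- c) *\<^sub>R (2 *\<^sub>R a - z)"
  by (simp add: algebra_simps)

lemma zz_alt_sum: "2 *\<^sub>R (\<Sum>i<m. ((-1)^i) *\<^sub>R p i) = u - ((-1)^m) *\<^sub>R zz p u m"
proof (induction m)
  case 0 then show ?case by simp
next
  case (Suc m)
  have e1: "(\<Sum>i<Suc m. ((-1)^i) *\<^sub>R p i) = (\<Sum>i<m. ((-1)^i) *\<^sub>R p i) + ((-1)^m) *\<^sub>R p m"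
    by (rule sum.lessThan_Suc)
  have e2: "(-1::real)^Suc m = - ((-1)^m)" by simp
  have e3: "zz p u (Suc m) = 2 *\<^sub>R p m - zz p u m" by (rule zz.simps(2))
  show ?case unfolding e1 e2 e3 by (rule alt_aux[OF Suc.IH])
qed

lemma tail_aux:
  fixes S z1 zm a :: "'a::real_vector"
  shows "2 *\<^sub>R S = z1 - c *\<^sub>R zm \<Longrightarrow> 2 *\<^sub>R (c *\<^sub>R a + S) = z1 - (- c) *\<^sub>R (2 *\<^sub>R a - zm)"
  by (simp add: algebra_simps)

lemma zz_tail_sum: "2 *\<^sub>R (\<Sum>i\<in>{k<..<Suc k + d}. ((-1)^(i - Suc k)) *\<^sub>R p i)
   = zz p u (Suc k) - ((-1)^d) *\<^sub>R zz p u (Suc k + d)"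
proof (induction d)
  case 0
  have "{k<..<Suc k} = {}" by auto
  then show ?case by simp
next
  case (Suc d)
  have "{k<..<Suc k + Suc d} = insert (Suc k + d) {k<..<Suc k + d}" by auto
  then have e1: "(\<Sum>i\<in>{k<..<Suc k + Suc d}. ((-1)^(i - Suc k)) *\<^sub>R p i)
     = ((-1)^d) *\<^sub>R p (Suc k + d) + (\<Sum>i\<in>{k<..<Suc k + d}. ((-1)^(i - Suc k)) *\<^sub>R p i)"
    by simp
  have e3: "zz p u (Suc k + Suc d) = 2 *\<^sub>R p (Suc k + d) - zz p u (Suc k + d)" by simp
  have e2: "((-1::real)^Suc d) = - ((-1)^d)" by simp
  show ?case unfolding e1 e2 e3 by (rule tail_aux[OF Suc.IH])
qed

locale osb_setup =
  fixes n :: nat and E1 E2 :: "'d::finite sympl set" and a1 a2 :: "'d sympl"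
    and pr1 :: "'d sympl \<Rightarrow> 'd sympl"
  assumes sub1: "subspace E1" and sub2: "subspace E2"
    and lag1: "\<And>u v. u \<in> E1 \<Longrightarrow> v \<in> E1 \<Longrightarrow> omega u v = 0"
    and lag2: "\<And>u v. u \<in> E2 \<Longrightarrow> v \<in> E2 \<Longrightarrow> omega u v = 0"
    and lin: "linear pr1" and pr1_in: "\<And>x. pr1 x \<in> E1" and pr1_c: "\<And>x. x - pr1 x \<in> E2"
begin

definition sg :: real where "sg = (-1)^n"
definition U where "U p = a1 - sg *\<^sub>R pr1 (zz p 0 n + sg *\<^sub>R a1 - a2)"
definition Z where "Z p i = zz p (U p) i"
definition G where "G p = (\<Sum>i<n. omega (Z p i) (p i)) + omega (Z p n) a2 / 2 - omega (U p) a1 / 2"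

lemma sg_sq: "sg * sg = 1" unfolding sg_def by (simp flip: power_add power_mult_distrib)

lemma U_in: "U p - a1 \<in> E1"
  unfolding U_def using pr1_in sub1 by (simp add: subspace_neg subspace_scale)

lemma Z0: "Z p 0 = U p" by (simp add: Z_def)
lemma Z_Suc: "Z p (Suc i) = 2 *\<^sub>R p i - Z p i" by (simp add: Z_def)

lemma Zn_eq: "Z p n = zz p 0 n + sg *\<^sub>R U p"
  unfolding Z_def sg_def using zz_shift[of p 0 "U p" n] by simp

lemma Zn_in: "Z p n - a2 \<in> E2"
proof -
  define d where "d = zz p 0 n + sg *\<^sub>R a1 - a2"
  have "Z p n - a2 = zz p 0 n + sg *\<^sub>R a1 - (sg * sg) *\<^sub>R pr1 d - a2"
    unfolding Zn_eq U_def d_def by (simp add: algebra_simps)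
  also have "\<dots> = d - pr1 d" using sg_sq by (simp add: d_def)
  finally show ?thesis using pr1_c by simp
qed

lemma U_upd:
  assumes "k < n"
  shows "U (p(k := p k + h)) - U p = (- (sg * 2 * (-1)^(n - Suc k))) *\<^sub>R pr1 h"
proof -
  have "zz (p(k := p k + h)) 0 n = zz p 0 n + (2 * (-1)^(n - Suc k)) *\<^sub>R h"
    using zz_upd[of p k h 0 n] assms by simp
  then show ?thesis unfolding U_def
    by (simp add: linear_add[OF lin] linear_diff[OF lin] linear_scale[OF lin] algebra_simps)
qed

lemma Z_upd:
  "Z (p(k := p k + h)) i = Z p i + ((-1)^i) *\<^sub>R (U (p(k := p k + h)) - U p)
      + (if k < i then (2 * (-1)^(i - Suc k)) *\<^sub>R h else 0)"
proof -
  have "Z (p(k := p k + h)) i = zz (p(k := p k + h)) (U p + (U (p(k := p k + h)) - U p)) i"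
    by (simp add: Z_def)
  also have "\<dots> = zz (p(k := p k + h)) (U p) i + ((-1)^i) *\<^sub>R (U (p(k := p k + h)) - U p)"
    by (rule zz_shift)
  finally show ?thesis using zz_upd[of p k h "U p" i] by (simp add: Z_def algebra_simps)
qed

end

context osb_setup begin

lemma G_diff:
  assumes kn: "k < n"
  shows "G (p(k := p k + h)) - G p = omega h (Z p (Suc k) - Z p k)
           + (-1)^k * omega (U (p(k := p k + h)) - U p) h"
proof -
  define p' where "p' = p(k := p k + h)"
  define \<delta> where "\<delta> = U p' - U p"
  define u where "u = U p"
  define w where "w = Z p n"
  define t :: real where "t = (-1)^(n - Suc k)"
  define A where "A = (\<Sum>i<n. ((-1)^i) *\<^sub>R p i)"
  define B where "B = (\<Sum>i\<in>{k<..<n}. ((-1)^(i - Suc k)) *\<^sub>R p i)"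
  have pt: "omega (Z p' i) (p' i) = omega (Z p i) (p i) + (-1)^i * omega \<delta> (p i)
      + (if k < i then 2 * (-1)^(i - Suc k) * omega h (p i) else 0)
      + (if i = k then omega (Z p i) h + (-1)^i * omega \<delta> h else 0)" for i
    unfolding p'_def \<delta>_def Z_upd by (cases "i = k") (auto simp: algebra_simps)
  have S1: "(\<Sum>i<n. (-1)^i * omega \<delta> (p i)) = omega \<delta> A"
    unfolding A_def omega_sum_right by simp
  have "(\<Sum>i<n. (if k < i then 2 * (-1)^(i - Suc k) * omega h (p i) else 0))
      = (\<Sum>i\<in>{..<n} \<inter> {i. k < i}. 2 * (-1)^(i - Suc k) * omega h (p i))"
    by (simp add: sum.If_cases)
  also have "{..<n} \<inter> {i. k < i} = {k<..<n}" by auto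
  also have "(\<Sum>i\<in>{k<..<n}. 2 * (-1)^(i - Suc k) * omega h (p i)) = 2 * omega h B"
    unfolding B_def omega_sum_right by (simp add: sum_distrib_left mult.assoc)
  finally have S2: "(\<Sum>i<n. (if k < i then 2 * (-1)^(i - Suc k) * omega h (p i) else 0)) = 2 * omega h B" .
  have S3: "(\<Sum>i<n. (if i = k then omega (Z p i) h + (-1)^i * omega \<delta> h else 0))
      = omega (Z p k) h + (-1)^k * omega \<delta> h"
    using kn by (simp add: sum.delta)
  have sum_eq: "(\<Sum>i<n. omega (Z p' i) (p' i)) = (\<Sum>i<n. omega (Z p i) (p i)) + omega \<delta> A
      + 2 * omega h B + omega (Z p k) h + (-1)^k * omega \<delta> h"
    unfolding pt sum.distrib S1 S2 S3 by simp
  have A_eq: "2 *\<^sub>R A = u - sg *\<^sub>R w"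
    unfolding A_def u_def w_def Z_def sg_def by (rule zz_alt_sum)
  have B_eq: "2 *\<^sub>R B = Z p (Suc k) - t *\<^sub>R w"
  proof -
    have "Suc k + (n - Suc k) = n" using kn by simp
    then show ?thesis
      using zz_tail_sum[where k=k and d="n - Suc k" and p=p and u="U p"] unfolding B_def w_def t_def Z_def by simp
  qed
  have Zn': "Z p' n = w + sg *\<^sub>R \<delta> + (2 * t) *\<^sub>R h"
    unfolding p'_def w_def \<delta>_def t_def sg_def Z_upd using kn by simp
  have L1: "omega \<delta> (u - a1) = 0"
  proof -
    have "\<delta> = (U p' - a1) - (U p - a1)" by (simp add: \<delta>_def)
    then have "\<delta> \<in> E1" using U_in sub1 by (metis subspace_diff)
    then show ?thesis using lag1 U_in u_def by blast
  qed
  have L2: "omega (Z p' n - w) (w - a2) = 0"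
  proof -
    have "Z p' n - w = (Z p' n - a2) - (Z p n - a2)" by (simp add: w_def)
    then have "Z p' n - w \<in> E2" using Zn_in sub2 by (metis subspace_diff)
    then show ?thesis using lag2 Zn_in w_def by blast
  qed
  have eA: "2 * omega \<delta> A = omega \<delta> u - sg * omega \<delta> w"
    using arg_cong[OF A_eq, of "omega \<delta>"] by simp
  have eB: "2 * omega h B = omega h (Z p (Suc k)) - t * omega h w"
    using arg_cong[OF B_eq, of "omega h"] by simp
  have eL1: "omega \<delta> u = omega \<delta> a1" using L1 by simp
  have eL2: "sg * omega \<delta> w + 2 * t * omega h w = sg * omega \<delta> a2 + 2 * t * omega h a2"
  proof -
    have "omega (sg *\<^sub>R \<delta> + (2 * t) *\<^sub>R h) (w - a2) = 0" using L2 unfolding Zn' by simp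
    then have "sg * omega \<delta> w - sg * omega \<delta> a2 + (2 * t * omega h w - 2 * t * omega h a2) = 0"
      by (simp add: right_diff_distrib)
    then show ?thesis by argo
  qed
  have as: "omega (Z p k) h = - omega h (Z p k)" by (rule omega_antisym)
  define X1 where "X1 = sg * omega \<delta> w"
  define X2 where "X2 = t * omega h w"
  define X3 where "X3 = sg * omega \<delta> a2"
  define X4 where "X4 = t * omega h a2"
  define X5 where "X5 = (-1)^k * omega \<delta> h"
  have e0: "G p' - G p = omega \<delta> A + 2 * omega h B + omega (Z p k) h + X5
      + omega (Z p' n) a2 / 2 - omega w a2 / 2 - omega (U p') a1 / 2 + omega u a1 / 2"
    unfolding G_def sum_eq X5_def by (simp add: w_def u_def)
  have e1: "omega (U p') a1 = omega u a1 + omega \<delta> a1" by (simp add: \<delta>_def u_def)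
  have e2: "omega (Z p' n) a2 = omega w a2 + X3 + 2 * X4"
    unfolding Zn' X3_def X4_def by simp
  have eA': "2 * omega \<delta> A = omega \<delta> u - X1" using eA unfolding X1_def .
  have eB': "2 * omega h B = omega h (Z p (Suc k)) - X2" using eB unfolding X2_def .
  have eL2': "X1 + 2 * X2 = X3 + 2 * X4" using eL2 unfolding X1_def X2_def X3_def X4_def by (simp add: mult.assoc)
  have "G p' - G p = omega h (Z p (Suc k)) - omega h (Z p k) + X5"
    using e0 e1 e2 eA' eB' eL1 eL2' as by argo
  then have "G p' - G p = omega h (Z p (Suc k) - Z p k) + X5" by simp
  then show ?thesis unfolding p'_def \<delta>_def X5_def by simp
qed

end

context osb_setup begin

lemma pr1_bl: "bounded_linear pr1" using lin by (simp add: linear_conv_bounded_linear)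

lemma crit:
  fixes C :: "(nat \<Rightarrow> 'd sympl) set" and \<phi> :: "'k::euclidean_space \<Rightarrow> 'a::euclidean_space"
    and f :: "'a \<Rightarrow> 'd sympl"
  assumes ext: "(\<forall>q\<in>C. G q \<le> G p) \<or> (\<forall>q\<in>C. G p \<le> G q)"
    and kn: "k < n"
    and closed: "\<And>w'. w' \<in> W \<Longrightarrow> p(k := f (\<phi> w')) \<in> C"
    and W: "open W" "w \<in> W"
    and diff: "((f \<circ> \<phi>) has_derivative D) (at w)"
    and pk: "f (\<phi> w) = p k"
  shows "omega (Z p (Suc k) - Z p k) (D v) = 0"
proof -
  define g where "g = f \<circ> \<phi>"
  define X where "X = Z p (Suc k) - Z p k"
  define \<kappa> :: real where "\<kappa> = - (sg * 2 * (-1)^(n - Suc k))"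
  define c :: real where "c = (-1)^k * \<kappa>"
  define F where "F w' = omega (g w' - g w) X + c * omega (pr1 (g w' - g w)) (g w' - g w)" for w'
  have FG: "F w' = G (p(k := f (\<phi> w'))) - G p" for w'
  proof -
    define h where "h = g w' - p k"
    have e: "p(k := f (\<phi> w')) = p(k := p k + h)" by (simp add: h_def g_def)
    have "G (p(k := p k + h)) - G p = omega h X + (-1)^k * omega (\<kappa> *\<^sub>R pr1 h) h"
      using G_diff[OF kn, of p h] U_upd[OF kn, of p h] unfolding X_def \<kappa>_def by simp
    then show ?thesis unfolding e F_def c_def using pk by (simp add: h_def g_def right_diff_distrib)
  qed
  have Fw: "F w = 0" unfolding F_def by (simp add: linear_0[OF lin])
  have mono: "(\<forall>y\<in>W. F y \<le> F w) \<or> (\<forall>y\<in>W. F w \<le> F y)"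
  proof (rule disjE[OF ext])
    assume A: "\<forall>q\<in>C. G q \<le> G p"
    have "F y \<le> F w" if "y \<in> W" for y
      unfolding Fw FG[of y] using A closed[OF that] by auto
    then show ?thesis by blast
  next
    assume A: "\<forall>q\<in>C. G p \<le> G q"
    have "F w \<le> F y" if "y \<in> W" for y
      unfolding Fw FG[of y] using A closed[OF that] by auto
    then show ?thesis by blast
  qed
  have hd: "((\<lambda>w'. g w' - g w) has_derivative D) (at w)"
    using has_derivative_diff[OF diff[folded g_def] has_derivative_const[of "g w"]] by simp
  have h1: "((\<lambda>w'. omega (g w' - g w) X) has_derivative (\<lambda>v. omega (D v) X)) (at w)"
    using bounded_bilinear.FDERIV[OF bounded_bilinear_omega hd has_derivative_const[of X]] by simp
  have h2: "((\<lambda>w'. pr1 (g w' - g w)) has_derivative (\<lambda>v. pr1 (D v))) (at w)"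
    by (rule bounded_linear.has_derivative[OF pr1_bl hd])
  have h3: "((\<lambda>w'. omega (pr1 (g w' - g w)) (g w' - g w)) has_derivative (\<lambda>v. 0)) (at w)"
    using bounded_bilinear.FDERIV[OF bounded_bilinear_omega h2 hd] by (simp add: linear_0[OF lin])
  have h4: "((\<lambda>w'. c * omega (pr1 (g w' - g w)) (g w' - g w)) has_derivative (\<lambda>v. c * 0)) (at w)"
    by (rule has_derivative_mult_right[OF h3])
  have hF: "(F has_derivative (\<lambda>v. omega (D v) X + c * 0)) (at w)"
    unfolding F_def[abs_def] by (rule has_derivative_add[OF h1 h4])
  have "(\<lambda>v. omega (D v) X + c * 0) = (\<lambda>v. 0)"
    by (rule differential_zero_maxmin[OF W(2) W(1) hF mono])
  then have "omega (D v) X = 0" by (metis add.right_neutral mult_zero_right)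
  then show ?thesis unfolding X_def by (metis omega_antisym neg_equal_0_iff_equal)
qed

end

context osb_setup begin

lemma degen:
  assumes jn: "Suc k < n" and eq: "p k = p (Suc k)"
  shows "G (p(k := Y, Suc k := Y)) = G p"
    and "Z (p(k := Y, Suc k := Y)) k = Z p k"
proof -
  have kn: "k < n" using jn by simp
  define h where "h = Y - p k"
  define p1 where "p1 = p(k := p k + h)"
  have p1k: "p1 (Suc k) = p k" using eq by (simp add: p1_def)
  have pp: "p(k := Y, Suc k := Y) = p1(Suc k := p1 (Suc k) + h)"
    by (simp add: p1_def h_def eq)
  define \<kappa> :: real where "\<kappa> = - (sg * 2 * (-1)^(n - Suc (Suc k)))"
  have nn: "n - Suc k = Suc (n - Suc (Suc k))" using jn by simp
  have D1: "U p1 - U p = (- \<kappa>) *\<^sub>R pr1 h"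
    using U_upd[OF kn, of p h] unfolding p1_def \<kappa>_def nn by simp
  have D2: "U (p1(Suc k := p1 (Suc k) + h)) - U p1 = \<kappa> *\<^sub>R pr1 h"
    using U_upd[OF jn, of p1 h] unfolding \<kappa>_def by simp
  have G1: "G p1 - G p = omega h (Z p (Suc k) - Z p k) + (-1)^k * omega ((- \<kappa>) *\<^sub>R pr1 h) h"
    using G_diff[OF kn, of p h] D1 unfolding p1_def by simp
  have G2: "G (p1(Suc k := p1 (Suc k) + h)) - G p1
      = omega h (Z p1 (Suc (Suc k)) - Z p1 (Suc k)) + (-1)^(Suc k) * omega (\<kappa> *\<^sub>R pr1 h) h"
    using G_diff[OF jn, of p1 h] D2 by simp
  have Z1: "Z p1 (Suc k) = Z p (Suc k) + ((-1)^(Suc k)) *\<^sub>R ((- \<kappa>) *\<^sub>R pr1 h) + 2 *\<^sub>R h"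
    using Z_upd[of p k h "Suc k"] D1 unfolding p1_def by simp
  have Z2: "Z p1 (Suc (Suc k)) = Z p (Suc (Suc k)) + ((-1)^(Suc (Suc k))) *\<^sub>R ((- \<kappa>) *\<^sub>R pr1 h) - 2 *\<^sub>R h"
    using Z_upd[of p k h "Suc (Suc k)"] D1 unfolding p1_def by simp
  have Zeq: "Z p (Suc (Suc k)) = Z p k"
    using eq by (simp add: Z_Suc)
  define s :: real where "s = (-1)^k"
  define P where "P = omega (pr1 h) h"
  define R where "R = s * \<kappa> * P"
  have as: "omega h (pr1 h) = - P" unfolding P_def by (rule omega_antisym)
  have g1: "G p1 - G p = omega h (Z p (Suc k)) - omega h (Z p k) - R"
    using G1 unfolding R_def s_def P_def by simp
  have g2: "G (p1(Suc k := p1 (Suc k) + h)) - G p1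
      = omega h (Z p1 (Suc (Suc k))) - omega h (Z p1 (Suc k)) - R"
    using G2 unfolding R_def s_def P_def by simp
  have z2: "omega h (Z p1 (Suc (Suc k))) = omega h (Z p k) - s * \<kappa> * omega h (pr1 h)"
    unfolding Z2 Zeq s_def by simp
  have z1: "omega h (Z p1 (Suc k)) = omega h (Z p (Suc k)) + s * \<kappa> * omega h (pr1 h)"
    unfolding Z1 s_def by simp
  have r: "s * \<kappa> * omega h (pr1 h) = - R" unfolding as R_def by simp
  have "G (p(k := Y, Suc k := Y)) - G p = 0"
    unfolding pp using g1 g2 z1 z2 r by argo
  then show "G (p(k := Y, Suc k := Y)) = G p" by simp
  have Zk1: "Z p1 k = Z p k + ((-1)^k) *\<^sub>R ((- \<kappa>) *\<^sub>R pr1 h)"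
    using Z_upd[of p k h k] D1 unfolding p1_def by simp
  have Zk2: "Z (p1(Suc k := p1 (Suc k) + h)) k = Z p1 k + ((-1)^k) *\<^sub>R (\<kappa> *\<^sub>R pr1 h)"
    using Z_upd[of p1 "Suc k" h k] D2 by simp
  show "Z (p(k := Y, Suc k := Y)) k = Z p k"
    unfolding pp Zk2 Zk1 by (simp add: algebra_simps)
qed

end

lemma smooth_cont: "smooth_on W g \<Longrightarrow> continuous_on W g"
  unfolding smooth_on_def by (metis Ck.simps(1))

lemma smooth_diff:
  assumes "smooth_on W g" "open W" "w \<in> W"
  shows "(g has_derivative frechet_derivative g (at w)) (at w)"
proof -
  have "Ck (Suc 0) W g" using assms(1) unfolding smooth_on_def by blast
  then have "g differentiable_on W" by simp
  then have "g differentiable at w" using assms(2,3) differentiable_on_eq_differentiable_at by blast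
  then show ?thesis by (rule frechet_derivative_works[THEN iffD1])
qed

lemma immersion_cont:
  fixes S :: "'a::euclidean_space set" and f :: "'a \<Rightarrow> 'v::euclidean_space"
  assumes "closed_manifold TYPE('k::euclidean_space) S" "immersion TYPE('k) S f"
  shows "continuous_on S f"
proof -
  have "continuous (at x within S) f" if "x \<in> S" for x
  proof -
    have "\<forall>p\<in>S. \<exists>(\<phi>::'k \<Rightarrow> 'a) W. local_param S \<phi> W \<and> p \<in> \<phi> ` W"
      using assms(1) unfolding closed_manifold_def by (rule conjunct2)
    then have "\<exists>(\<phi>::'k \<Rightarrow> 'a) W. local_param S \<phi> W \<and> x \<in> \<phi> ` W" using that by (rule bspec)
    then obtain \<phi> :: "'k \<Rightarrow> 'a" and W where lp: "local_param S \<phi> W" and xw: "x \<in> \<phi> ` W"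
      by (elim exE conjE)
    have "\<exists>U. open U \<and> \<phi> ` W = S \<inter> U \<and> inj_on \<phi> W \<and> continuous_on (S \<inter> U) (inv_into W \<phi>)"
      using lp unfolding local_param_def by (elim conjE)
    then obtain U where U: "open U" "\<phi> ` W = S \<inter> U" "continuous_on (S \<inter> U) (inv_into W \<phi>)"
      by (elim exE conjE)
    have "\<forall>(\<phi>::'k \<Rightarrow> 'a) W. local_param S \<phi> W \<longrightarrow>
        smooth_on W (f \<circ> \<phi>) \<and> (\<forall>w\<in>W. inj (frechet_derivative (f \<circ> \<phi>) (at w)))"
      using assms(2) unfolding immersion_def .
    then have sm: "smooth_on W (f \<circ> \<phi>)" using lp by (elim allE impE conjE)
    have c1: "continuous_on W (f \<circ> \<phi>)" by (rule smooth_cont[OF sm])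
    have sub: "inv_into W \<phi> ` (S \<inter> U) \<subseteq> W"
    proof
      fix z assume "z \<in> inv_into W \<phi> ` (S \<inter> U)"
      then obtain y where "y \<in> S \<inter> U" "z = inv_into W \<phi> y" by blast
      then show "z \<in> W" using U(2) by (metis inv_into_into)
    qed
    have c2: "continuous_on (S \<inter> U) (\<lambda>y. (f \<circ> \<phi>) (inv_into W \<phi> y))"
      by (rule continuous_on_compose2[OF c1 U(3) sub])
    have eq: "(f \<circ> \<phi>) (inv_into W \<phi> y) = f y" if "y \<in> S \<inter> U" for y
    proof -
      have "y \<in> \<phi> ` W" using that U(2) by blast
      then show ?thesis by (simp add: f_inv_into_f)
    qed
    have c3: "continuous_on (S \<inter> U) f"
      using c2 eq by (metis (no_types, lifting) continuous_on_cong)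
    have xSU: "x \<in> S \<inter> U" using xw U(2) by blast
    then have "continuous (at x within S \<inter> U) f"
      using c3 continuous_on_eq_continuous_within by blast
    moreover have "at x within S = at x within S \<inter> U"
      by (rule at_within_nhd[of x U]) (use xSU U(1) in auto)
    ultimately show ?thesis by simp
  qed
  then show ?thesis by (simp add: continuous_on_eq_continuous_within)
qed

lemma cont_coord: "continuous_on A (\<lambda>p::nat \<Rightarrow> 'd::finite sympl. p i)"
  by (rule continuous_on_subset[OF continuous_on_product_coordinates]) simp

lemma cont_zz: "continuous_on A g \<Longrightarrow> continuous_on A (\<lambda>p. zz p (g p) i)"
  by (induction i) (auto intro!: continuous_intros cont_coord)

context osb_setup begin

definition Cset where "Cset K = PiE UNIV (\<lambda>i. if i < n then K else {0})"

lemma Cset_mem: "p \<in> Cset K \<longleftrightarrow> (\<forall>i<n. p i \<in> K) \<and> (\<forall>i. n \<le> i \<longrightarrow> p i = 0)"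
proof -
  have "p \<in> Cset K \<longleftrightarrow> (\<forall>i. p i \<in> (if i < n then K else {0}))"
    unfolding Cset_def PiE_UNIV_domain Pi_iff by simp
  also have "\<dots> \<longleftrightarrow> (\<forall>i<n. p i \<in> K) \<and> (\<forall>i. n \<le> i \<longrightarrow> p i = 0)"
  proof
    assume H: "\<forall>i. p i \<in> (if i < n then K else {0})"
    show "(\<forall>i<n. p i \<in> K) \<and> (\<forall>i. n \<le> i \<longrightarrow> p i = 0)"
    proof (intro conjI allI impI)
      fix i assume "i < n" then show "p i \<in> K" using H[rule_format, of i] by simp
    next
      fix i assume "n \<le> i" then show "p i = 0" using H[rule_format, of i] by simp
    qed
  next
    assume H: "(\<forall>i<n. p i \<in> K) \<and> (\<forall>i. n \<le> i \<longrightarrow> p i = 0)"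
    show "\<forall>i. p i \<in> (if i < n then K else {0})"
    proof
      fix i show "p i \<in> (if i < n then K else {0})"
      proof (cases "i < n")
        case True then show ?thesis using H by simp
      next
        case False then show ?thesis using H by simp
      qed
    qed
  qed
  finally show ?thesis .
qed

lemma Cset_compact: "compact K \<Longrightarrow> compact (Cset K)"
proof -
  assume K: "compact K"
  have "compactin (product_topology (\<lambda>i. euclidean) UNIV) (Cset K)"
    unfolding Cset_def compactin_PiE using K by auto
  then show ?thesis by (simp add: euclidean_product_topology)
qed

lemma cont_U: "continuous_on A U"
  unfolding U_def[abs_def]
  by (intro continuous_intros bounded_linear.continuous_on[OF pr1_bl] cont_zz)

lemma cont_G: "continuous_on A G"
  unfolding G_def[abs_def] Z_def by (intro continuous_intros cont_zz cont_U cont_coord) auto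

definition zs where "zs p = map (Z p) [0..<Suc n]"

lemma zs_nth: "i \<le> n \<Longrightarrow> zs p ! i = Z p i"
  unfolding zs_def by (simp del: upt_Suc add: nth_upt less_Suc_eq_le)

lemma p_from_Z: "p i = (1/2) *\<^sub>R (Z p i + Z p (Suc i))"
proof -
  have "Z p i + Z p (Suc i) = Z p i + (2 *\<^sub>R p i - Z p i)" by (simp only: Z_Suc)
  also have "\<dots> = 2 *\<^sub>R p i" by (simp only: add_diff_eq add_diff_cancel_left')
  finally have "(1/2) *\<^sub>R (Z p i + Z p (Suc i)) = (1/2) *\<^sub>R (2 *\<^sub>R p i)" by (rule arg_cong)
  also have "\<dots> = p i" by (simp only: scaleR_scaleR) simp
  finally show ?thesis by (rule sym)
qed

lemma traj:
  fixes S :: "'a::euclidean_space set" and f :: "'a \<Rightarrow> 'd sympl"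
  assumes imm: "immersion TYPE('k::euclidean_space) S f"
    and ext: "(\<forall>q\<in>Cset (f ` S). G q \<le> G p) \<or> (\<forall>q\<in>Cset (f ` S). G p \<le> G q)"
    and pC: "p \<in> Cset (f ` S)"
    and kn: "k < n" and Q: "Q \<in> S" "f Q = p k"
  shows "Z p (Suc k) - Z p k \<in> symp_orth (tangent_space TYPE('k) S f Q)"
  unfolding symp_orth_def
proof (intro CollectI ballI)
  fix \<zeta> assume "\<zeta> \<in> tangent_space TYPE('k) S f Q"
  then obtain \<phi> :: "'k \<Rightarrow> 'a" and W w where lp: "local_param S \<phi> W" and ww: "w \<in> W" and pw: "\<phi> w = Q"
    and zr: "\<zeta> \<in> range (frechet_derivative (f \<circ> \<phi>) (at w))"
    unfolding tangent_space_def by blast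
  then obtain v where \<zeta>: "\<zeta> = frechet_derivative (f \<circ> \<phi>) (at w) v" by blast
  from lp obtain U where W: "open W" "\<phi> ` W = S \<inter> U" unfolding local_param_def by blast
  have sm: "smooth_on W (f \<circ> \<phi>)" using imm lp unfolding immersion_def by blast
  have d: "((f \<circ> \<phi>) has_derivative frechet_derivative (f \<circ> \<phi>) (at w)) (at w)"
    by (rule smooth_diff[OF sm W(1) ww])
  have cl: "p(k := f (\<phi> w')) \<in> Cset (f ` S)" if "w' \<in> W" for w'
  proof -
    have "\<phi> w' \<in> S" using that W(2) by blast
    then have fi: "f (\<phi> w') \<in> f ` S" by (rule imageI)
    have A: "\<forall>i<n. p i \<in> f ` S" and B: "\<forall>i. n \<le> i \<longrightarrow> p i = 0" using pC unfolding Cset_mem by blast+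
    show ?thesis unfolding Cset_mem
    proof (intro conjI allI impI)
      fix i assume "i < n" then show "(p(k := f (\<phi> w'))) i \<in> f ` S" using A fi by (cases "i = k") auto
    next
      fix i assume "n \<le> i" then show "(p(k := f (\<phi> w'))) i = 0" using B kn by (cases "i = k") auto
    qed
  qed
  have pk: "f (\<phi> w) = p k" using Q pw by simp
  show "omega (Z p (Suc k) - Z p k) \<zeta> = 0"
    unfolding \<zeta> by (rule crit[OF ext kn cl W(1) ww d pk])
qed

lemma nondeg:
  fixes S :: "'a::euclidean_space set" and f :: "'a \<Rightarrow> 'd sympl"
  assumes imm: "immersion TYPE('k::euclidean_space) S f"
    and LL: "cond_LL TYPE('k) S f"
    and ext: "(\<forall>q\<in>Cset (f ` S). G q \<le> G p) \<or> (\<forall>q\<in>Cset (f ` S). G p \<le> G q)"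
    and pC: "p \<in> Cset (f ` S)"
    and jn: "Suc k < n"
  shows "Z p k \<noteq> Z p (Suc (Suc k))"
proof
  assume eqZ: "Z p k = Z p (Suc (Suc k))"
  have "Z p (Suc (Suc k)) = 2 *\<^sub>R p (Suc k) - (2 *\<^sub>R p k - Z p k)" by (simp add: Z_Suc)
  then have "2 *\<^sub>R (p (Suc k) - p k) = 0" using eqZ by (simp add: scaleR_diff_right)
  then have eqp: "p k = p (Suc k)" by simp
  define P where "P = Z p k"
  have "\<forall>x\<in>S. tangent_space TYPE('k) S f x \<subseteq> symp_compl (f x - P)"
  proof (intro ballI subsetI)
    fix x \<zeta> assume x: "x \<in> S" and \<zeta>: "\<zeta> \<in> tangent_space TYPE('k) S f x"
    define q where "q = p(k := f x, Suc k := f x)"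
    have Gq: "G q = G p" unfolding q_def by (rule degen(1)[OF jn eqp])
    have Zq: "Z q k = P" unfolding q_def P_def by (rule degen(2)[OF jn eqp])
    have qC: "q \<in> Cset (f ` S)" using pC x jn unfolding Cset_mem q_def by auto
    have extq: "(\<forall>q'\<in>Cset (f ` S). G q' \<le> G q) \<or> (\<forall>q'\<in>Cset (f ` S). G q \<le> G q')"
      using ext Gq by simp
    have qk: "f x = q k" by (simp add: q_def)
    have "Z q (Suc k) - Z q k \<in> symp_orth (tangent_space TYPE('k) S f x)"
      using jn by (intro traj[OF imm extq qC _ x qk]) simp
    then have o: "omega (Z q (Suc k) - Z q k) \<zeta> = 0" using \<zeta> unfolding symp_orth_def by blast
    have "Z q (Suc k) - Z q k = 2 *\<^sub>R (f x - P)"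
      unfolding Z_Suc Zq qk[symmetric] by (simp add: scaleR_diff_right scaleR_2)
    then have "2 * omega (f x - P) \<zeta> = 0" using o by simp
    then have "omega \<zeta> (f x - P) = 0" using omega_antisym[of \<zeta> "f x - P"] by simp
    then show "\<zeta> \<in> symp_compl (f x - P)" unfolding symp_compl_def by simp
  qed
  then show False using LL unfolding cond_LL_def by blast
qed

end

context osb_setup begin

lemma good_traj:
  fixes S :: "'a::euclidean_space set" and f :: "'a \<Rightarrow> 'd sympl"
  assumes imm: "immersion TYPE('k::euclidean_space) S f"
    and LL: "cond_LL TYPE('k) S f"
    and L1: "L1 = (\<lambda>w. a1 + w) ` E1" and L2: "L2 = (\<lambda>w. a2 + w) ` E2"
    and pC: "p \<in> Cset (f ` S)"
    and ext: "(\<forall>q\<in>Cset (f ` S). G q \<le> G p) \<or> (\<forall>q\<in>Cset (f ` S). G p \<le> G q)"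
  shows "osb_trajectory TYPE('k) S f n L1 L2 (zs p) \<and> non_degenerate n (zs p)"
proof
  have A: "\<forall>i<n. p i \<in> f ` S" using pC unfolding Cset_mem by blast
  have len: "length (zs p) = n + 1" by (simp add: zs_def)
  have z0: "zs p ! 0 \<in> L1"
  proof -
    have "zs p ! 0 = U p" using zs_nth[of 0 p] Z0 by simp
    moreover have "U p = a1 + (U p - a1)" by simp
    ultimately show ?thesis unfolding L1 using U_in by (metis image_eqI)
  qed
  have zn: "zs p ! n \<in> L2"
  proof -
    have "zs p ! n = Z p n" using zs_nth[of n p] by simp
    moreover have "Z p n = a2 + (Z p n - a2)" by simp
    ultimately show ?thesis unfolding L2 using Zn_in by (metis image_eqI)
  qed
  have corr: "osb_corr TYPE('k) S f (zs p ! i) (zs p ! (i + 1))" if i: "i < n" for i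
  proof -
    obtain Q where Q: "Q \<in> S" "f Q = p i" using A i by (metis imageE)
    have e1: "zs p ! i = Z p i" using i zs_nth[of i p] by simp
    have e2: "zs p ! (i + 1) = Z p (Suc i)" using i zs_nth[of "Suc i" p] by simp
    have m: "f Q = (1/2) *\<^sub>R (Z p i + Z p (Suc i))" using Q(2) p_from_Z[of p i] by simp
    have o: "Z p (Suc i) - Z p i \<in> symp_orth (tangent_space TYPE('k) S f Q)"
      by (rule traj[OF imm ext pC i Q])
    show ?thesis unfolding osb_corr_def e1 e2 using Q(1) m o by blast
  qed
  show "osb_trajectory TYPE('k) S f n L1 L2 (zs p)"
    unfolding osb_trajectory_def using len z0 zn corr by blast
  show "non_degenerate n (zs p)"
    unfolding non_degenerate_def
  proof (intro allI impI)
    fix i assume i: "1 \<le> i \<and> i + 1 \<le> n"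
    then obtain k where k: "i = Suc k" by (metis Suc_le_D One_nat_def)
    have jn: "Suc k < n" using i k by simp
    have e1: "zs p ! (i - 1) = Z p k" using zs_nth[of k p] jn k by simp
    have e2: "zs p ! (i + 1) = Z p (Suc (Suc k))" using zs_nth[of "Suc (Suc k)" p] jn k by simp
    show "zs p ! (i - 1) \<noteq> zs p ! (i + 1)"
      unfolding e1 e2 by (rule nondeg[OF imm LL ext pC jn])
  qed
qed

lemma locale_main:
  fixes S :: "'a::euclidean_space set" and f :: "'a \<Rightarrow> 'd sympl"
  assumes cm: "closed_manifold TYPE('k::euclidean_space) S"
    and imm: "immersion TYPE('k) S f"
    and LL: "cond_LL TYPE('k) S f"
    and L1: "L1 = (\<lambda>w. a1 + w) ` E1" and L2: "L2 = (\<lambda>w. a2 + w) ` E2"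
    and n2: "n \<ge> 2"
  shows "\<exists>zs1 zs2. zs1 \<noteq> zs2 \<and>
           osb_trajectory TYPE('k) S f n L1 L2 zs1 \<and> non_degenerate n zs1 \<and>
           osb_trajectory TYPE('k) S f n L1 L2 zs2 \<and> non_degenerate n zs2"
proof -
  define K where "K = f ` S"
  obtain s0 where s0: "s0 \<in> S" using LL unfolding cond_LL_def by blast
  have Kc: "compact K" unfolding K_def
    using cm immersion_cont[OF cm imm] unfolding closed_manifold_def
    by (blast intro: compact_continuous_image)
  define q0 where "q0 = (\<lambda>i. if i < n then f s0 else 0)"
  have q0C: "q0 \<in> Cset K" unfolding Cset_mem q0_def K_def using s0 by auto
  have Cne: "Cset K \<noteq> {}" using q0C by blast
  have Cc: "compact (Cset K)" by (rule Cset_compact[OF Kc])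
  obtain pmax where pmax: "pmax \<in> Cset K" "\<forall>q\<in>Cset K. G q \<le> G pmax"
    using continuous_attains_sup[OF Cc Cne cont_G] by blast
  obtain pmin where pmin: "pmin \<in> Cset K" "\<forall>q\<in>Cset K. G pmin \<le> G q"
    using continuous_attains_inf[OF Cc Cne cont_G] by blast
  have gmax: "osb_trajectory TYPE('k) S f n L1 L2 (zs pmax) \<and> non_degenerate n (zs pmax)"
    using good_traj[OF imm LL L1 L2] pmax unfolding K_def by blast
  have gmin: "osb_trajectory TYPE('k) S f n L1 L2 (zs pmin) \<and> non_degenerate n (zs pmin)"
    using good_traj[OF imm LL L1 L2] pmin unfolding K_def by blast
  have dist: "zs pmax \<noteq> zs pmin"
  proof
    assume eq: "zs pmax = zs pmin"
    have Zeq: "Z pmax i = Z pmin i" if "i \<le> n" for i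
      using zs_nth[OF that, of pmax] zs_nth[OF that, of pmin] eq by simp
    have "pmax = pmin"
    proof
      fix i
      show "pmax i = pmin i"
      proof (cases "i < n")
        case True
        then show ?thesis using p_from_Z[of pmax i] p_from_Z[of pmin i] Zeq[of i] Zeq[of "Suc i"] by simp
      next
        case False
        then show ?thesis using pmax(1) pmin(1) unfolding Cset_mem by simp
      qed
    qed
    then have allq: "\<forall>q\<in>Cset K. G q \<le> G q0"
      using pmax(2) pmin(2) q0C by (metis order_trans)
    have "Z q0 0 \<noteq> Z q0 (Suc (Suc 0))"
      using n2 allq q0C unfolding K_def by (intro nondeg[OF imm LL _ q0C[unfolded K_def]]) auto
    moreover have "Z q0 (Suc (Suc 0)) = Z q0 0"
      using n2 by (simp add: Z_Suc q0_def)
    ultimately show False by simp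
  qed
  show ?thesis using dist gmax gmin by blast
qed

end

theorem mainTheorem2:
  fixes S :: "'a::euclidean_space set"
    and f :: "'a \<Rightarrow> 'd::finite sympl"
    and L1 L2 :: "'d sympl set"
    and n :: nat
  assumes "closed_manifold TYPE('k::euclidean_space) S"
    and "immersion TYPE('k) S f"
    and "cond_LL TYPE('k) S f"
    and "affine_lagrangian L1" and "affine_lagrangian L2"
    and "general_position L1 L2"
    and "n \<ge> 2"
  shows "\<exists>zs1 zs2. zs1 \<noteq> zs2 \<and>
           osb_trajectory TYPE('k) S f n L1 L2 zs1 \<and> non_degenerate n zs1 \<and>
           osb_trajectory TYPE('k) S f n L1 L2 zs2 \<and> non_degenerate n zs2"
proof -
  obtain a1 E1 where E1: "subspace E1" "dim E1 = CARD('d)" "\<forall>u\<in>E1. \<forall>v\<in>E1. omega u v = 0"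
      "L1 = (\<lambda>w. a1 + w) ` E1" "direction L1 = E1"
    by (rule lagr_data[OF assms(4)])
  obtain a2 E2 where E2: "subspace E2" "dim E2 = CARD('d)" "\<forall>u\<in>E2. \<forall>v\<in>E2. omega u v = 0"
      "L2 = (\<lambda>w. a2 + w) ` E2" "direction L2 = E2"
    by (rule lagr_data[OF assms(5)])
  have I: "E1 \<inter> E2 = {0}" using assms(6) E1(5) E2(5) unfolding general_position_def by simp
  obtain pr1 where pr: "linear pr1" "\<And>x. pr1 x \<in> E1" "\<And>x. x - pr1 x \<in> E2"
    by (rule complement_proj[OF E1(1) E2(1) E1(2) E2(2) I]) blast
  have os: "osb_setup E1 E2 pr1"
    unfolding osb_setup_def using E1(1,3) E2(1,3) pr by simp
  show ?thesis by (rule osb_setup.locale_main[OF os assms(1,2,3) E1(4) E2(4) assms(7)])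
qed

end
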